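(* Let $(P,e)$, $P\in\mathcal{T}_k$, be a friendly tree pattern, let $\sigma(P,e)=(\tau(P),C)$ be its associated mesh pattern, let $i$ be the position of the largest value $k$ in $\tau(P)$, and let $\sigma^-(P,e)=(\tau(P),C\setminus\{(i-1,k)\})$. Then the mesh pattern $\sigma^-(P,e)$ is tame.
   Context: Binary trees: $\mathcal{T}_k$ is the set of binary trees on $k$ vertices labeled $1,\dots,k$ by the search tree property (left-subtree vertices of $i$ smaller, right-subtree vertices larger). $c_L(i),c_R(i),p(i)$: left child, right child, parent ($\varepsilon$ if nonexistent); $r(P)$ the root; $P(i)$ the subtree rooted at $i$; $L(i),R(i)$ the subtrees rooted at $c_L(i),c_R(i)$. $B_R(i)=\{i,c_R(i),c_R^2(i),\dots\}$ is the vertex set of the right branch starting at $i$; $B_R^-(i)$ is $B_R(i)$ minus its last vertex. A tree pattern is $(P,e)$ with $e\colon[k]\setminus\{r(P)\}\to\{0,1\}$. The preorder permutation is $\tau(\varepsilon)=$ empty, $\tau(P)=(r(P),\tau(L(P)),\tau(R(P)))$. $(P,e)$ is friendly if: (i) $p(k)\neq\varepsilon$ and $c_L(k)\neq\varepsilon$; (ii) $e(j)=0$ for all $j\in B_R^-(r(P))\setminus\{r(P)\}$; (iii) if $e(k)=1$ then $e(c_L(k))=0$. Mesh patterns: a mesh pattern is $(\tau,C)$, $\tau\in S_k$, $C\subseteq\{0,\dots,k\}^2$. With $G(\pi)=\{(j,\pi(j))\}$, $\pi\in S_n$ contains $(\tau,C)$ if there are indices $\nu_1<\dots<\nu_k$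 with $\pi(\nu_1),\dots,\pi(\nu_k)$ order-isomorphic to $\tau$ and, for $\lambda_1<\dots<\lambda_k$ these values sorted and $\nu_0=\lambda_0=0$, $\nu_{k+1}=\lambda_{k+1}=n+1$, $G(\pi)\cap((\nu_a,\nu_{a+1})\times(\lambda_b,\lambda_{b+1}))=\emptyset$ for all $(a,b)\in C$. $S_n(\sigma)$ denotes the permutations of $[n]$ avoiding $\sigma$. $\sigma(P,e)$: with $\rho=\tau(P)^{-1}$, $C_j=\{(\rho(j)-1,m):m\in B_R^-(j)\}$ for $j\in[k]$, and for non-root $j$, $C_j'=\emptyset$ if $e(j)=0$, $C_j'=\{(\rho(j)-1,\min P(j)-1),(\rho(j)-1,\max P(j))\}$ if $e(j)=1$; $\sigma(P,e)=(\tau(P),\bigcup_j C_j\cup\bigcup_j C_j')$. Tameness: for $\pi\in S_{n-1}$ and $1\le j\le n$, $c_j(\pi)\in S_n$ inserts the value $n$ at position $j$; for $\pi\in S_n$, $p(\pi)\in S_{n-1}$ removes the value $n$. $L_n\subseteq S_n$ is a zigzag language if either $n=0$ and $L_0=\{\varepsilon\}$, or $n\ge1$, $L_{n-1}:=\{p(\pi):\pi\in L_n\}$ is a zigzag language, and $c_1(\pi),c_n(\pi)\in L_n$ for all $\pi\in L_{n-1}$. A sequence $L_0,L_1,\dots$ is hereditary if $L_{n-1}=p(L_n)$ for all $n\ge1$. A pattern $\sigma$ is tame if $S_n(\sigma)$, $n\ge0$, is a hereditary sequence of zigzag languages. *)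

theory Defs
  imports "HOL-Library.Tree"
begin

text \<open>T_k: binary trees on k vertices labelled 1..k by the search tree property,
  i.e. the in-order reading of the labels is 1,2,...,k.\<close>
definition trees :: "nat \<Rightarrow> nat tree set" where
  "trees k = {P. inorder P = [1..<k+1]}"

fun root_opt :: "nat tree \<Rightarrow> nat option" where
  "root_opt Leaf = None"
| "root_opt (Node l a r) = Some a"

fun subtree_at :: "nat tree \<Rightarrow> nat \<Rightarrow> nat tree" where
  "subtree_at Leaf i = Leaf"
| "subtree_at (Node l a r) i =
     (if i = a then Node l a r else if i < a then subtree_at l i else subtree_at r i)"

fun lsub :: "nat tree \<Rightarrow> nat tree" where
  "lsub Leaf = Leaf" | "lsub (Node l a r) = l"
fun rsub :: "nat tree \<Rightarrow> nat tree" where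
  "rsub Leaf = Leaf" | "rsub (Node l a r) = r"

text \<open>Left child, right child (None plays the role of epsilon).\<close>
definition cL :: "nat tree \<Rightarrow> nat \<Rightarrow> nat option" where
  "cL P i = root_opt (lsub (subtree_at P i))"
definition cR :: "nat tree \<Rightarrow> nat \<Rightarrow> nat option" where
  "cR P i = root_opt (rsub (subtree_at P i))"

fun parent :: "nat tree \<Rightarrow> nat \<Rightarrow> nat option" where
  "parent Leaf i = None"
| "parent (Node l a r) i =
     (if root_opt l = Some i \<or> root_opt r = Some i then Some a
      else if i < a then parent l i else parent r i)"

definition root :: "nat tree \<Rightarrow> nat" where
  "root P = the (root_opt P)"

fun rspine :: "nat tree \<Rightarrow> nat list" where
  "rspine Leaf = []"
| "rspine (Node l a r) = a # rspine r"

definition BR :: "nat tree \<Rightarrow> nat \<Rightarrow> nat set" where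
  "BR P i = set (rspine (subtree_at P i))"
definition BRm :: "nat tree \<Rightarrow> nat \<Rightarrow> nat set" where
  "BRm P i = set (butlast (rspine (subtree_at P i)))"

definition minP :: "nat tree \<Rightarrow> nat \<Rightarrow> nat" where
  "minP P i = Min (set_tree (subtree_at P i))"
definition maxP :: "nat tree \<Rightarrow> nat \<Rightarrow> nat" where
  "maxP P i = Max (set_tree (subtree_at P i))"

text \<open>Tree patterns: e is encoded as a boolean function (True = 1, False = 0);
  only its values on [k] minus the root matter.\<close>
definition friendly :: "nat \<Rightarrow> nat tree \<Rightarrow> (nat \<Rightarrow> bool) \<Rightarrow> bool" where
  "friendly k P e \<longleftrightarrow>
     parent P k \<noteq> None \<and> cL P k \<noteq> None
   \<and> (\<forall>j \<in> BRm P (root P) - {root P}. \<not> e j)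
   \<and> (e k \<longrightarrow> \<not> e (the (cL P k)))"

text \<open>Permutations of [n] as lists (one-line notation); pi(j) = xs ! (j-1).\<close>
definition perms :: "nat \<Rightarrow> nat list set" where
  "perms n = {xs. length xs = n \<and> distinct xs \<and> set xs = {1..n}}"

definition pval :: "nat list \<Rightarrow> nat \<Rightarrow> nat" where
  "pval xs j = xs ! (j - 1)"

type_synonym mesh = "nat list \<times> (nat \<times> nat) set"

definition contains :: "nat list \<Rightarrow> mesh \<Rightarrow> bool" where
  "contains pi \<sigma> \<longleftrightarrow>
    (let tau = fst \<sigma>; C = snd \<sigma>; k = length tau; n = length pi in
     \<exists>\<nu> :: nat \<Rightarrow> nat.
       (\<forall>a \<in> {1..k}. 1 \<le> \<nu> a \<and> \<nu> a \<le> n)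
     \<and> (\<forall>a \<in> {1..k}. \<forall>b \<in> {1..k}. a < b \<longrightarrow> \<nu> a < \<nu> b)
     \<and> (\<forall>a \<in> {1..k}. \<forall>b \<in> {1..k}.
           pval pi (\<nu> a) < pval pi (\<nu> b) \<longleftrightarrow> pval tau a < pval tau b)
     \<and> (let lam = sort (map (\<lambda>a. pval pi (\<nu> a)) [1..<k+1]);
            nu' = (\<lambda>a. if a = 0 then 0 else if a = k + 1 then n + 1 else \<nu> a);
            lam' = (\<lambda>b. if b = 0 then 0 else if b = k + 1 then n + 1 else lam ! (b - 1))
        in \<forall>(a, b) \<in> C. \<not> (\<exists>j \<in> {1..n}. nu' a < j \<and> j < nu' (a + 1)
                                 \<and> lam' b < pval pi j \<and> pval pi j < lam' (b + 1))))"

definition avoiders :: "nat \<Rightarrow> mesh \<Rightarrow> nat list set" where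
  "avoiders n \<sigma> = {pi \<in> perms n. \<not> contains pi \<sigma>}"

definition cins :: "nat \<Rightarrow> nat list \<Rightarrow> nat list" where
  "cins j pi = take (j - 1) pi @ [Suc (length pi)] @ drop (j - 1) pi"

definition prem :: "nat list \<Rightarrow> nat list" where
  "prem pi = removeAll (length pi) pi"

fun zigzag :: "nat \<Rightarrow> nat list set \<Rightarrow> bool" where
  "zigzag 0 L \<longleftrightarrow> L = {[]}"
| "zigzag (Suc m) L \<longleftrightarrow> L \<subseteq> perms (Suc m) \<and> zigzag m (prem ` L)
     \<and> (\<forall>pi \<in> prem ` L. cins 1 pi \<in> L \<and> cins (Suc m) pi \<in> L)"

definition hereditary :: "(nat \<Rightarrow> nat list set) \<Rightarrow> bool" where
  "hereditary L \<longleftrightarrow> (\<forall>n \<ge> 1. L (n - 1) = prem ` L n)"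

definition tame :: "mesh \<Rightarrow> bool" where
  "tame \<sigma> \<longleftrightarrow> (\<forall>n. zigzag n (avoiders n \<sigma>)) \<and> hereditary (\<lambda>n. avoiders n \<sigma>)"

text \<open>rho = tau(P)^{-1}: 1-based position of j in the preorder word.\<close>
definition rho :: "nat tree \<Rightarrow> nat \<Rightarrow> nat" where
  "rho P j = Suc (LEAST i. i < length (preorder P) \<and> preorder P ! i = j)"

definition Cset :: "nat tree \<Rightarrow> nat \<Rightarrow> (nat \<times> nat) set" where
  "Cset P j = {(rho P j - 1, m) | m. m \<in> BRm P j}"

definition Cset' :: "nat tree \<Rightarrow> (nat \<Rightarrow> bool) \<Rightarrow> nat \<Rightarrow> (nat \<times> nat) set" where
  "Cset' P e j = (if e j then {(rho P j - 1, minP P j - 1), (rho P j - 1, maxP P j)} else {})"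

definition sigma :: "nat \<Rightarrow> nat tree \<Rightarrow> (nat \<Rightarrow> bool) \<Rightarrow> mesh" where
  "sigma k P e = (preorder P,
     (\<Union>j \<in> {1..k}. Cset P j) \<union> (\<Union>j \<in> {1..k} - {root P}. Cset' P e j))"

definition sigma_minus :: "nat \<Rightarrow> nat tree \<Rightarrow> (nat \<Rightarrow> bool) \<Rightarrow> mesh" where
  "sigma_minus k P e = (fst (sigma k P e), snd (sigma k P e) - {(rho P k - 1, k)})"

end

theory Submission
  imports Defs
begin


definition sh :: "nat \<Rightarrow> nat \<Rightarrow> nat" where "sh j x = (if x < j then x else Suc x)"
definition unsh :: "nat \<Rightarrow> nat \<Rightarrow> nat" where "unsh j y = (if y < j then y else y - 1)"

definition nuext :: "nat \<Rightarrow> nat \<Rightarrow> (nat \<Rightarrow> nat) \<Rightarrow> nat \<Rightarrow> nat" where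
  "nuext k n \<nu> a = (if a = 0 then 0 else if a = k + 1 then n + 1 else \<nu> a)"
definition lamext :: "nat \<Rightarrow> nat \<Rightarrow> nat list \<Rightarrow> nat \<Rightarrow> nat" where
  "lamext k n lam b = (if b = 0 then 0 else if b = k + 1 then n + 1 else lam ! (b - 1))"
definition lamof :: "nat list \<Rightarrow> (nat \<Rightarrow> nat) \<Rightarrow> nat \<Rightarrow> nat list" where
  "lamof pi \<nu> k = sort (map (\<lambda>a. pval pi (\<nu> a)) [1..<k+1])"

definition occ :: "nat list \<Rightarrow> nat list \<Rightarrow> (nat \<times> nat) set \<Rightarrow> (nat \<Rightarrow> nat) \<Rightarrow> bool" where
  "occ pi tau C \<nu> \<longleftrightarrow>
       (\<forall>a \<in> {1..length tau}. 1 \<le> \<nu> a \<and> \<nu> a \<le> length pi)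
     \<and> (\<forall>a \<in> {1..length tau}. \<forall>b \<in> {1..length tau}. a < b \<longrightarrow> \<nu> a < \<nu> b)
     \<and> (\<forall>a \<in> {1..length tau}. \<forall>b \<in> {1..length tau}.
           pval pi (\<nu> a) < pval pi (\<nu> b) \<longleftrightarrow> pval tau a < pval tau b)
     \<and> (\<forall>(a, b) \<in> C. \<not> (\<exists>j \<in> {1..length pi}.
            nuext (length tau) (length pi) \<nu> a < j \<and> j < nuext (length tau) (length pi) \<nu> (a + 1)
          \<and> lamext (length tau) (length pi) (lamof pi \<nu> (length tau)) b < pval pi j
          \<and> pval pi j < lamext (length tau) (length pi) (lamof pi \<nu> (length tau)) (b + 1)))"

lemma contains_occ: "contains pi (tau, C) \<longleftrightarrow> (\<exists>\<nu>. occ pi tau C \<nu>)"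
  unfolding contains_def occ_def Let_def nuext_def lamext_def lamof_def by simp

lemma sh_less_iff[simp]: "sh j p < sh j q \<longleftrightarrow> p < q"
  unfolding sh_def by auto

lemma sh_unsh: "y \<noteq> j \<Longrightarrow> sh j (unsh j y) = y"
  unfolding sh_def unsh_def by auto

lemma length_cins: "j \<le> Suc (length pi) \<Longrightarrow> length (cins j pi) = Suc (length pi)"
  unfolding cins_def by simp

lemma pval_cins_sh:
  assumes "1 \<le> j" "j \<le> Suc (length pi)" "1 \<le> x" "x \<le> length pi"
  shows "pval (cins j pi) (sh j x) = pval pi x"
proof (cases "x < j")
  case True
  then have "x - 1 < j - 1" "x - 1 < length pi" using assms by simp_all
  then show ?thesis using assms True unfolding pval_def cins_def sh_def
    by (simp add: nth_append min_def)
next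
  case False
  have l: "length (take (j - 1) pi) = j - 1" using assms by simp
  have "pval (cins j pi) (sh j x) = (take (j - 1) pi @ [Suc (length pi)] @ drop (j - 1) pi) ! x"
    unfolding pval_def cins_def sh_def using False by simp
  also have "\<dots> = ([Suc (length pi)] @ drop (j - 1) pi) ! (x - (j - 1))"
    using False l assms by (auto simp add: nth_append)
  also have "\<dots> = drop (j - 1) pi ! (x - j)"
    using False assms by (simp add: nth_append Suc_diff_le)
  also have "\<dots> = pi ! (x - 1)" using False assms by simp
  finally show ?thesis unfolding pval_def .
qed

lemma pval_cins_j:
  assumes "1 \<le> j" "j \<le> Suc (length pi)"
  shows "pval (cins j pi) j = Suc (length pi)"
  using assms unfolding pval_def cins_def by (simp add: nth_append min_def)

lemma perms_pval:
  assumes "pi \<in> perms n" "1 \<le> x" "x \<le> n"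
  shows "pval pi x \<in> {1..n}"
proof -
  have "pi ! (x - 1) \<in> set pi" using assms unfolding perms_def by auto
  then show ?thesis using assms unfolding perms_def pval_def by auto
qed

lemma lamof_le:
  assumes "pi \<in> perms n" "\<forall>a \<in> {1..k}. 1 \<le> \<nu> a \<and> \<nu> a \<le> n" "b < k"
  shows "lamof pi \<nu> k ! b \<le> n"
proof -
  have "length (lamof pi \<nu> k) = k" unfolding lamof_def by simp
  then have "lamof pi \<nu> k ! b \<in> set (lamof pi \<nu> k)" using assms(3) by simp
  moreover have "set (lamof pi \<nu> k) = (\<lambda>a. pval pi (\<nu> a)) ` {1..k}"
    unfolding lamof_def set_sort set_map set_upt by (simp add: atLeastLessThanSuc_atLeastAtMost)
  ultimately obtain a where a: "a \<in> {1..k}" "lamof pi \<nu> k ! b = pval pi (\<nu> a)"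
    by auto
  then show ?thesis using perms_pval[OF assms(1)] assms(2) by fastforce
qed

lemma lamext_eq: "b \<le> k \<Longrightarrow> lamext k n L b = lamext k m L b"
  unfolding lamext_def by simp

lemma occ_ins:
  assumes pi: "pi \<in> perms n" and j: "1 \<le> j" "j \<le> Suc n" and o: "occ pi tau C \<nu>"
    and Cb: "\<forall>(a,b)\<in>C. b < length tau"
  shows "occ (cins j pi) tau C (sh j \<circ> \<nu>)"
proof -
  define k where "k = length tau"
  have ln: "length pi = n" using pi unfolding perms_def by simp
  have len: "length (cins j pi) = Suc n" using length_cins[of j pi] j ln by simp
  have rng: "\<forall>a \<in> {1..k}. 1 \<le> \<nu> a \<and> \<nu> a \<le> n"
    and mono: "\<forall>a \<in> {1..k}. \<forall>b \<in> {1..k}. a < b \<longrightarrow> \<nu> a < \<nu> b"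
    and iso: "\<forall>a \<in> {1..k}. \<forall>b \<in> {1..k}. pval pi (\<nu> a) < pval pi (\<nu> b) \<longleftrightarrow> pval tau a < pval tau b"
    and box: "\<forall>(a, b) \<in> C. \<not> (\<exists>x \<in> {1..n}.
            nuext k n \<nu> a < x \<and> x < nuext k n \<nu> (a + 1)
          \<and> lamext k n (lamof pi \<nu> k) b < pval pi x
          \<and> pval pi x < lamext k n (lamof pi \<nu> k) (b + 1))"
    using o unfolding occ_def k_def ln by auto
  have pv: "\<And>x. 1 \<le> x \<Longrightarrow> x \<le> n \<Longrightarrow> pval (cins j pi) (sh j x) = pval pi x"
    using pval_cins_sh[of j pi] j ln by simp
  have pvj: "pval (cins j pi) j = Suc n" using pval_cins_j[of j pi] j ln by simp
  have lam: "lamof (cins j pi) (sh j \<circ> \<nu>) k = lamof pi \<nu> k"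
    unfolding lamof_def using rng pv by (intro arg_cong[where f=sort] map_cong) auto
  have nu: "\<And>a. nuext k (Suc n) (sh j \<circ> \<nu>) a = sh j (nuext k n \<nu> a)"
    unfolding nuext_def sh_def using j by auto
  have shle: "\<And>x. 1 \<le> x \<Longrightarrow> x \<le> n \<Longrightarrow> 1 \<le> sh j x \<and> sh j x \<le> Suc n"
    unfolding sh_def by auto
  show ?thesis
    unfolding occ_def len k_def[symmetric]
  proof (intro conjI)
    show "\<forall>a\<in>{1..k}. 1 \<le> (sh j \<circ> \<nu>) a \<and> (sh j \<circ> \<nu>) a \<le> Suc n"
      using rng shle by simp
    show "\<forall>a\<in>{1..k}. \<forall>b\<in>{1..k}. a < b \<longrightarrow> (sh j \<circ> \<nu>) a < (sh j \<circ> \<nu>) b"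
      using mono by simp
    show "\<forall>a\<in>{1..k}. \<forall>b\<in>{1..k}. pval (cins j pi) ((sh j \<circ> \<nu>) a) < pval (cins j pi) ((sh j \<circ> \<nu>) b)
        \<longleftrightarrow> pval tau a < pval tau b"
      using iso rng pv by simp
    show "\<forall>(a, b)\<in>C. \<not> (\<exists>x\<in>{1..Suc n}.
            nuext k (Suc n) (sh j \<circ> \<nu>) a < x \<and> x < nuext k (Suc n) (sh j \<circ> \<nu>) (a + 1)
          \<and> lamext k (Suc n) (lamof (cins j pi) (sh j \<circ> \<nu>) k) b < pval (cins j pi) x
          \<and> pval (cins j pi) x < lamext k (Suc n) (lamof (cins j pi) (sh j \<circ> \<nu>) k) (b + 1))"
    proof (clarify)
      fix a b x
      assume ab: "(a, b) \<in> C" and x: "x \<in> {1..Suc n}"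
        and h1: "nuext k (Suc n) (sh j \<circ> \<nu>) a < x" and h2: "x < nuext k (Suc n) (sh j \<circ> \<nu>) (a + 1)"
        and h3: "lamext k (Suc n) (lamof (cins j pi) (sh j \<circ> \<nu>) k) b < pval (cins j pi) x"
        and h4: "pval (cins j pi) x < lamext k (Suc n) (lamof (cins j pi) (sh j \<circ> \<nu>) k) (b + 1)"
      have bk: "b < k" using ab Cb k_def by auto
      have L1: "lamext k (Suc n) (lamof pi \<nu> k) b = lamext k n (lamof pi \<nu> k) b"
        using bk lamext_eq by simp
      have L2: "lamext k (Suc n) (lamof pi \<nu> k) (b + 1) = lamext k n (lamof pi \<nu> k) (b + 1)"
        using bk lamext_eq by simp
      show False
      proof (cases "x = j")
        case True
        have "lamext k (Suc n) (lamof pi \<nu> k) (b + 1) = lamof pi \<nu> k ! b"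
          unfolding lamext_def using bk by simp
        also have "\<dots> \<le> n" using lamof_le[OF pi rng bk] .
        finally show False using h4 True pvj lam by simp
      next
        case False
        define y where "y = unsh j x"
        have xy: "x = sh j y" using sh_unsh[OF False] y_def by simp
        have y: "1 \<le> y" "y \<le> n" using x False j unfolding y_def unsh_def by auto
        have "nuext k n \<nu> a < y" "y < nuext k n \<nu> (a + 1)"
          using h1 h2 unfolding nu xy by simp_all
        moreover have "lamext k n (lamof pi \<nu> k) b < pval pi y"
          "pval pi y < lamext k n (lamof pi \<nu> k) (b + 1)"
          using h3 h4 unfolding lam xy pv[OF y] L1 L2 by simp_all
        ultimately show False using box ab y by auto
      qed
    qed
  qed
qed

lemma perms_max_pos:
  assumes "tau \<in> perms k" "1 \<le> k"
  shows "\<exists>c \<in> {1..k}. pval tau c = k"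
proof -
  have "k \<in> set tau" using assms unfolding perms_def by auto
  then obtain c where "c < length tau" "tau ! c = k" by (metis in_set_conv_nth)
  then show ?thesis using assms unfolding perms_def pval_def
    by (intro bexI[of _ "Suc c"]) auto
qed

lemma occ_rem:
  assumes pi: "pi \<in> perms n" and tau: "tau \<in> perms k" and j: "j = 1 \<or> j = Suc n"
    and o: "occ (cins j pi) tau C \<nu>"
    and Cb: "\<forall>(a,b)\<in>C. a \<le> k \<and> b < k"
    and t1: "pval tau 1 \<noteq> k" and tk: "pval tau k \<noteq> k"
  shows "occ pi tau C (unsh j \<circ> \<nu>)"
proof -
  have kt: "length tau = k" using tau unfolding perms_def by simp
  have ln: "length pi = n" using pi unfolding perms_def by simp
  have j1: "1 \<le> j" "j \<le> Suc n" using j by auto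
  have len: "length (cins j pi) = Suc n" using length_cins[of j pi] j1 ln by simp
  have rng: "\<forall>a \<in> {1..k}. 1 \<le> \<nu> a \<and> \<nu> a \<le> Suc n"
    and mono: "\<forall>a \<in> {1..k}. \<forall>b \<in> {1..k}. a < b \<longrightarrow> \<nu> a < \<nu> b"
    and iso: "\<forall>a \<in> {1..k}. \<forall>b \<in> {1..k}. pval (cins j pi) (\<nu> a) < pval (cins j pi) (\<nu> b) \<longleftrightarrow> pval tau a < pval tau b"
    and box: "\<forall>(a, b) \<in> C. \<not> (\<exists>x \<in> {1..Suc n}.
            nuext k (Suc n) \<nu> a < x \<and> x < nuext k (Suc n) \<nu> (a + 1)
          \<and> lamext k (Suc n) (lamof (cins j pi) \<nu> k) b < pval (cins j pi) x
          \<and> pval (cins j pi) x < lamext k (Suc n) (lamof (cins j pi) \<nu> k) (b + 1))"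
    using o unfolding occ_def kt len by auto
  have pv: "\<And>x. 1 \<le> x \<Longrightarrow> x \<le> n \<Longrightarrow> pval (cins j pi) (sh j x) = pval pi x"
    using pval_cins_sh[of j pi] j1 ln by simp
  have pvj: "pval (cins j pi) j = Suc n" using pval_cins_j[of j pi] j1 ln by simp
  have unr: "\<And>x. 1 \<le> x \<Longrightarrow> x \<le> Suc n \<Longrightarrow> x \<noteq> j \<Longrightarrow> 1 \<le> unsh j x \<and> unsh j x \<le> n"
    using j1 unfolding unsh_def by auto
  have notj: "\<forall>a \<in> {1..k}. \<nu> a \<noteq> j"
  proof (rule ccontr)
    assume "\<not> ?thesis"
    then obtain a0 where a0: "a0 \<in> {1..k}" "\<nu> a0 = j" by auto
    have less: "pval tau b < pval tau a0" if b: "b \<in> {1..k}" "b \<noteq> a0" for b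
    proof -
      have "\<nu> b \<noteq> j" using mono a0 b by (metis nat_neq_iff)
      then have "pval (cins j pi) (\<nu> b) = pval pi (unsh j (\<nu> b))"
        using pv[of "unsh j (\<nu> b)"] unr[of "\<nu> b"] rng b sh_unsh by simp
      also have "\<dots> \<le> n" using perms_pval[OF pi] unr[of "\<nu> b"] rng b \<open>\<nu> b \<noteq> j\<close> by auto
      finally have "pval (cins j pi) (\<nu> b) < pval (cins j pi) (\<nu> a0)" using a0 pvj by simp
      then show ?thesis using iso a0 b by auto
    qed
    have k1: "1 \<le> k" using a0 by simp
    obtain c where c: "c \<in> {1..k}" "pval tau c = k" using perms_max_pos[OF tau k1] by auto
    have "pval tau a0 \<le> k" using perms_pval[OF tau] a0 by auto
    then have "c = a0" using less[OF c(1)] c(2) by fastforce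
    show False
    proof (cases "j = 1")
      case True
      have "a0 = 1"
      proof (rule ccontr)
        assume "a0 \<noteq> 1"
        then have "\<nu> 1 < \<nu> a0" using mono a0 k1 by auto
        then show False using rng[rule_format, of 1] k1 a0 True by auto
      qed
      then show False using t1 c \<open>c = a0\<close> by simp
    next
      case False
      then have jn: "j = Suc n" using j by simp
      have "a0 = k"
      proof (rule ccontr)
        assume "a0 \<noteq> k"
        then have "\<nu> a0 < \<nu> k" using mono a0 k1 by auto
        then show False using rng[rule_format, of k] k1 a0 jn by auto
      qed
      then show False using tk c \<open>c = a0\<close> by simp
    qed
  qed
  have shu: "\<And>a. a \<in> {1..k} \<Longrightarrow> sh j ((unsh j \<circ> \<nu>) a) = \<nu> a"
    using notj sh_unsh by simp
  have rng2: "\<And>a. a \<in> {1..k} \<Longrightarrow> 1 \<le> (unsh j \<circ> \<nu>) a \<and> (unsh j \<circ> \<nu>) a \<le> n"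
    using unr rng notj by simp
  have lam: "lamof (cins j pi) \<nu> k = lamof pi (unsh j \<circ> \<nu>) k"
    unfolding lamof_def
  proof (intro arg_cong[where f=sort] map_cong refl)
    fix a assume "a \<in> set [1..<k+1]"
    then have a: "a \<in> {1..k}" by auto
    show "pval (cins j pi) (\<nu> a) = pval pi ((unsh j \<circ> \<nu>) a)"
      using pv[of "(unsh j \<circ> \<nu>) a"] rng2[OF a] shu[OF a] by simp
  qed
  have nu: "\<And>a. a \<le> Suc k \<Longrightarrow> nuext k (Suc n) \<nu> a = sh j (nuext k n (unsh j \<circ> \<nu>) a)"
  proof -
    fix a assume "a \<le> Suc k"
    then consider "a = 0" | "a = Suc k" | "a \<in> {1..k}" by force
    then show "nuext k (Suc n) \<nu> a = sh j (nuext k n (unsh j \<circ> \<nu>) a)"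
    proof cases
      case 1 then show ?thesis unfolding nuext_def sh_def using j1 by simp
    next
      case 2 then show ?thesis unfolding nuext_def sh_def using j1 by simp
    next
      case 3 then show ?thesis unfolding nuext_def using shu[OF 3] by simp
    qed
  qed
  show ?thesis
    unfolding occ_def kt ln
  proof (intro conjI)
    show "\<forall>a\<in>{1..k}. 1 \<le> (unsh j \<circ> \<nu>) a \<and> (unsh j \<circ> \<nu>) a \<le> n"
      using rng2 by blast
    show "\<forall>a\<in>{1..k}. \<forall>b\<in>{1..k}. a < b \<longrightarrow> (unsh j \<circ> \<nu>) a < (unsh j \<circ> \<nu>) b"
    proof (intro ballI impI)
      fix a b assume a: "a \<in> {1..k}" and b: "b \<in> {1..k}" and "a < b"
      then have "\<nu> a < \<nu> b" using mono by auto
      then have "sh j ((unsh j \<circ> \<nu>) a) < sh j ((unsh j \<circ> \<nu>) b)" using shu a b by simp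
      then show "(unsh j \<circ> \<nu>) a < (unsh j \<circ> \<nu>) b" by simp
    qed
    show "\<forall>a\<in>{1..k}. \<forall>b\<in>{1..k}. pval pi ((unsh j \<circ> \<nu>) a) < pval pi ((unsh j \<circ> \<nu>) b)
        \<longleftrightarrow> pval tau a < pval tau b"
    proof (intro ballI)
      fix a b assume a: "a \<in> {1..k}" and b: "b \<in> {1..k}"
      have "pval pi ((unsh j \<circ> \<nu>) a) = pval (cins j pi) (\<nu> a)"
        using pv[of "(unsh j \<circ> \<nu>) a"] rng2[OF a] shu[OF a] by simp
      moreover have "pval pi ((unsh j \<circ> \<nu>) b) = pval (cins j pi) (\<nu> b)"
        using pv[of "(unsh j \<circ> \<nu>) b"] rng2[OF b] shu[OF b] by simp
      ultimately show "pval pi ((unsh j \<circ> \<nu>) a) < pval pi ((unsh j \<circ> \<nu>) b)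
        \<longleftrightarrow> pval tau a < pval tau b" using iso a b by simp
    qed
    show "\<forall>(a, b)\<in>C. \<not> (\<exists>x\<in>{1..n}.
            nuext k n (unsh j \<circ> \<nu>) a < x \<and> x < nuext k n (unsh j \<circ> \<nu>) (a + 1)
          \<and> lamext k n (lamof pi (unsh j \<circ> \<nu>) k) b < pval pi x
          \<and> pval pi x < lamext k n (lamof pi (unsh j \<circ> \<nu>) k) (b + 1))"
    proof (clarify)
      fix a b y
      assume ab: "(a, b) \<in> C" and y: "y \<in> {1..n}"
        and h1: "nuext k n (unsh j \<circ> \<nu>) a < y" and h2: "y < nuext k n (unsh j \<circ> \<nu>) (a + 1)"
        and h3: "lamext k n (lamof pi (unsh j \<circ> \<nu>) k) b < pval pi y"
        and h4: "pval pi y < lamext k n (lamof pi (unsh j \<circ> \<nu>) k) (b + 1)"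
      have ak: "a \<le> k" and bk: "b < k" using ab Cb by auto
      have "nuext k (Suc n) \<nu> a < sh j y" "sh j y < nuext k (Suc n) \<nu> (a + 1)"
        using h1 h2 nu[of a] nu[of "a+1"] ak by simp_all
      moreover have "lamext k (Suc n) (lamof (cins j pi) \<nu> k) b < pval (cins j pi) (sh j y)"
          "pval (cins j pi) (sh j y) < lamext k (Suc n) (lamof (cins j pi) \<nu> k) (b + 1)"
        using h3 h4 y pv[of y] bk lamext_eq[of b k n _ "Suc n"] lamext_eq[of "b+1" k n _ "Suc n"]
        unfolding lam by simp_all
      moreover have "sh j y \<in> {1..Suc n}" using y unfolding sh_def by auto
      ultimately show False using box ab by auto
    qed
  qed
qed

lemma cins_perms:
  assumes pi: "pi \<in> perms n" and j: "1 \<le> j" "j \<le> Suc n"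
  shows "cins j pi \<in> perms (Suc n)"
proof -
  have ln: "length pi = n" and d: "distinct pi" and s: "set pi = {1..n}" using pi unfolding perms_def by auto
  have nn: "Suc n \<notin> set pi" using s by auto
  have eq: "take (j - 1) pi @ drop (j - 1) pi = pi" by simp
  have d2: "distinct (take (j - 1) pi @ drop (j - 1) pi)" using d eq by simp
  have s2: "set (take (j - 1) pi) \<union> set (drop (j - 1) pi) = set pi"
    using eq by (metis set_append)
  have "Suc n \<notin> set (take (j - 1) pi)" "Suc n \<notin> set (drop (j - 1) pi)" using nn s2 by auto
  moreover have "distinct (take (j - 1) pi)" "distinct (drop (j - 1) pi)"
    "set (take (j - 1) pi) \<inter> set (drop (j - 1) pi) = {}"
    using d2 by (simp_all only: distinct_append)
  ultimately have "distinct (take (j - 1) pi @ [Suc n] @ drop (j - 1) pi)" by auto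
  moreover have "set (take (j - 1) pi @ [Suc n] @ drop (j - 1) pi) = {1..Suc n}"
  proof -
    have "set (take (j - 1) pi @ [Suc n] @ drop (j - 1) pi) = insert (Suc n) (set pi)"
      using s2 by auto
    then show ?thesis using s by auto
  qed
  moreover have "length (cins j pi) = Suc n" using length_cins[of j pi] j ln by simp
  ultimately show ?thesis unfolding perms_def unfolding cins_def ln by simp
qed

lemma prem_cins:
  assumes pi: "pi \<in> perms n" and j: "j \<le> Suc n"
  shows "prem (cins j pi) = pi"
proof -
  have ln: "length pi = n" and s: "set pi = {1..n}" using pi unfolding perms_def by auto
  have nn: "Suc n \<notin> set pi" using s by auto
  then have "Suc n \<notin> set (take (j - 1) pi)" "Suc n \<notin> set (drop (j - 1) pi)"
    by (meson in_set_takeD in_set_dropD)+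
  then have r: "removeAll (Suc n) (take (j - 1) pi) = take (j - 1) pi"
     "removeAll (Suc n) (drop (j - 1) pi) = drop (j - 1) pi" by (simp_all add: removeAll_id)
  have lc: "length (cins j pi) = Suc n" using length_cins[of j pi] j ln by simp
  have "prem (cins j pi) = removeAll (Suc n) (take (j - 1) pi @ [Suc n] @ drop (j - 1) pi)"
    unfolding prem_def lc unfolding cins_def ln ..
  also have "\<dots> = take (j - 1) pi @ drop (j - 1) pi" by (simp only: removeAll_append r) simp
  finally show ?thesis by simp
qed

lemma prem_perms:
  assumes pi: "pi \<in> perms n" and n: "1 \<le> n"
  shows "prem pi \<in> perms (n - 1) \<and> (\<exists>j. 1 \<le> j \<and> j \<le> n \<and> pi = cins j (prem pi))"
proof -
  have ln: "length pi = n" and d: "distinct pi" and s: "set pi = {1..n}" using pi unfolding perms_def by auto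
  have "n \<in> set pi" using s n by auto
  then obtain xs ys where xy: "pi = xs @ n # ys" by (meson split_list)
  have l2: "Suc (length (xs @ ys)) = n" using ln unfolding xy by simp
  have d2: "distinct (xs @ ys)" "n \<notin> set xs" "n \<notin> set ys" using d unfolding xy by auto
  have s2: "set (xs @ ys) = {1..n} - {n}" using s d2 unfolding xy by auto
  have pr: "prem pi = xs @ ys" unfolding prem_def ln using d2(2,3) unfolding xy by (simp add: removeAll_id)
  have pp: "prem pi \<in> perms (n - 1)"
    unfolding perms_def pr using l2 d2(1) s2 by auto
  have ce: "cins (Suc (length xs)) (xs @ ys) = xs @ n # ys"
    unfolding cins_def l2 by simp
  have eq: "pi = cins (Suc (length xs)) (prem pi)" unfolding pr by (rule trans[OF xy sym[OF ce]])
  have le: "Suc (length xs) \<le> n" using l2 by simp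
  show ?thesis
    by (intro conjI pp exI[of _ "Suc (length xs)"] le eq) simp
qed

locale goodmesh =
  fixes tau :: "nat list" and C :: "(nat \<times> nat) set" and k :: nat
  assumes tau: "tau \<in> perms k" and k1: "1 \<le> k"
    and Cb: "\<forall>(a,b)\<in>C. a \<le> k \<and> b < k"
    and t1: "pval tau 1 \<noteq> k" and tk: "pval tau k \<noteq> k"
begin

lemma Cb': "\<forall>(a,b)\<in>C. b < length tau"
  using Cb tau unfolding perms_def by auto

lemma ins_contains:
  assumes "pi \<in> perms n" "1 \<le> j" "j \<le> Suc n" "contains pi (tau, C)"
  shows "contains (cins j pi) (tau, C)"
  using assms occ_ins[OF assms(1-3) _ Cb'] unfolding contains_occ by blast

lemma rem_contains:
  assumes "pi \<in> perms n" "j = 1 \<or> j = Suc n" "contains (cins j pi) (tau, C)"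
  shows "contains pi (tau, C)"
  using assms occ_rem[OF assms(1) tau assms(2) _ Cb t1 tk] unfolding contains_occ by blast

lemma ext_avoid:
  assumes a: "pi \<in> avoiders n (tau, C)" and j: "j = 1 \<or> j = Suc n"
  shows "cins j pi \<in> avoiders (Suc n) (tau, C)"
proof -
  have p: "pi \<in> perms n" and nc: "\<not> contains pi (tau, C)" using a unfolding avoiders_def by auto
  have "cins j pi \<in> perms (Suc n)" using cins_perms[OF p] j by auto
  moreover have "\<not> contains (cins j pi) (tau, C)" using rem_contains[OF p j] nc by blast
  ultimately show ?thesis unfolding avoiders_def by simp
qed

lemma prem_avoid:
  assumes "1 \<le> n"
  shows "prem ` avoiders n (tau, C) = avoiders (n - 1) (tau, C)"
proof
  show "prem ` avoiders n (tau, C) \<subseteq> avoiders (n - 1) (tau, C)"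
  proof
    fix x assume "x \<in> prem ` avoiders n (tau, C)"
    then obtain pi where pi: "pi \<in> avoiders n (tau, C)" "x = prem pi" by auto
    have pp: "pi \<in> perms n" "\<not> contains pi (tau, C)" using pi unfolding avoiders_def by auto
    have pr: "prem pi \<in> perms (n - 1)"
      using prem_perms[OF pp(1) assms] by (rule conjunct1)
    have ex: "\<exists>j. 1 \<le> j \<and> j \<le> n \<and> pi = cins j (prem pi)"
      using prem_perms[OF pp(1) assms] by (rule conjunct2)
    from ex obtain j where jj: "1 \<le> j \<and> j \<le> n \<and> pi = cins j (prem pi)" by (rule exE)
    have j1: "1 \<le> j" using jj by (rule conjunct1)
    have jn: "j \<le> Suc (n - 1)" using conjunct1[OF conjunct2[OF jj]] assms by simp
    have jeq: "cins j (prem pi) = pi" using conjunct2[OF conjunct2[OF jj]] by (rule sym)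
    have "\<not> contains (prem pi) (tau, C)"
    proof
      assume c: "contains (prem pi) (tau, C)"
      have "contains (cins j (prem pi)) (tau, C)" by (rule ins_contains[OF pr j1 jn c])
      then show False unfolding jeq using pp(2) by simp
    qed
    then show "x \<in> avoiders (n - 1) (tau, C)" using pr pi(2) unfolding avoiders_def by simp
  qed
next
  show "avoiders (n - 1) (tau, C) \<subseteq> prem ` avoiders n (tau, C)"
  proof
    fix x assume x: "x \<in> avoiders (n - 1) (tau, C)"
    then have "cins (Suc (n - 1)) x \<in> avoiders (Suc (n - 1)) (tau, C)" using ext_avoid by blast
    have xp: "x \<in> perms (n - 1)" using x unfolding avoiders_def by simp
    have "prem (cins (Suc (n - 1)) x) = x" by (rule prem_cins[OF xp le_refl])
    moreover have sn: "Suc (n - 1) = n" using assms by simp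
    ultimately show "x \<in> prem ` avoiders n (tau, C)"
      using \<open>cins (Suc (n - 1)) x \<in> avoiders (Suc (n - 1)) (tau, C)\<close>
      unfolding sn by (metis image_eqI)
  qed
qed

lemma avoid0: "avoiders 0 (tau, C) = {[]}"
proof -
  have "perms 0 = {[]}" unfolding perms_def by auto
  moreover have "\<not> contains [] (tau, C)"
  proof
    assume "contains [] (tau, C)"
    then obtain \<nu> where "occ [] tau C \<nu>" unfolding contains_occ by blast
    then have "\<forall>a \<in> {1..length tau}. 1 \<le> \<nu> a \<and> \<nu> a \<le> 0" unfolding occ_def list.size by (rule conjunct1)
    moreover have "length tau = k" using tau unfolding perms_def by simp
    ultimately show False using k1 by force
  qed
  ultimately show ?thesis unfolding avoiders_def by auto
qed

lemma zz: "zigzag n (avoiders n (tau, C))"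
proof (induction n)
  case 0
  then show ?case using avoid0 by simp
next
  case (Suc m)
  have pa: "prem ` avoiders (Suc m) (tau, C) = avoiders m (tau, C)"
    using prem_avoid[of "Suc m"] by simp
  show ?case
    unfolding zigzag.simps pa
  proof (intro conjI)
    show "avoiders (Suc m) (tau, C) \<subseteq> perms (Suc m)" unfolding avoiders_def by auto
    show "zigzag m (avoiders m (tau, C))" by (rule Suc.IH)
    show "\<forall>pi\<in>avoiders m (tau, C). cins 1 pi \<in> avoiders (Suc m) (tau, C) \<and> cins (Suc m) pi \<in> avoiders (Suc m) (tau, C)"
      using ext_avoid by blast
  qed
qed

lemma tame: "tame (tau, C)"
  unfolding tame_def hereditary_def
proof (intro conjI allI impI)
  fix n show "zigzag n (avoiders n (tau, C))" by (rule zz)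
next
  fix n :: nat assume "1 \<le> n"
  then show "avoiders (n - 1) (tau, C) = prem ` avoiders n (tau, C)" using prem_avoid by simp
qed

end



lemma distinct_preorder: "distinct (preorder t) \<longleftrightarrow> distinct (inorder t)"
  by (induction t) auto

lemma set_subtree_at: "set_tree (subtree_at t i) \<subseteq> set_tree t"
  by (induction t) auto

lemma bst_subtree_at: "bst t \<Longrightarrow> bst (subtree_at t i)"
  by (induction t) auto

lemma subtree_node: "bst t \<Longrightarrow> i \<in> set_tree t \<Longrightarrow> \<exists>l r. subtree_at t i = Node l i r"
  by (induction t) auto

lemma parent_in: "parent t i \<noteq> None \<Longrightarrow> i \<in> set_tree (lsub t) \<union> set_tree (rsub t)"
proof (induction t)
  case Leaf then show ?case by simp
next
  case (Node l a r)
  show ?case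
  proof (cases "root_opt l = Some i \<or> root_opt r = Some i")
    case True
    then show ?thesis by (cases l; cases r) auto
  next
    case False
    then show ?thesis using Node by (cases l; cases r) (auto split: if_splits)
  qed
qed

lemma preorder_split: "bst t \<Longrightarrow> i \<in> set_tree t \<Longrightarrow> \<exists>xs ys. preorder t = xs @ preorder (subtree_at t i) @ ys"
proof (induction t)
  case Leaf then show ?case by simp
next
  case (Node l a r)
  show ?case
  proof (cases "i = a")
    case True then show ?thesis by (intro exI[of _ "[]"]) simp
  next
    case False
    show ?thesis
    proof (cases "i < a")
      case True
      then have "i \<in> set_tree l" using Node.prems False by auto
      then obtain xs ys where "preorder l = xs @ preorder (subtree_at l i) @ ys" using Node by auto
      then show ?thesis using True by (intro exI[of _ "a # xs"] exI[of _ "ys @ preorder r"]) simp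
    next
      case False2: False
      then have "i \<in> set_tree r" using Node.prems False by auto
      then obtain xs ys where "preorder r = xs @ preorder (subtree_at r i) @ ys" using Node by auto
      then show ?thesis using False False2
        by (intro exI[of _ "a # preorder l @ xs"] exI[of _ "ys"]) simp
    qed
  qed
qed

lemma rspine_sorted: "bst t \<Longrightarrow> sorted_wrt (<) (rspine t)"
proof (induction t)
  case Leaf then show ?case by simp
next
  case (Node l a r)
  have "set (rspine r) \<subseteq> set_tree r" by (induction r) auto
  then show ?case using Node by auto
qed

lemma set_rspine: "set (rspine t) \<subseteq> set_tree t"
  by (induction t) auto

lemma spine_of_max:
  "bst t \<Longrightarrow> \<forall>x\<in>set_tree t. x \<le> k \<Longrightarrow> k \<in> set_tree (subtree_at t j) \<Longrightarrow> j \<in> set (rspine t)"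
proof (induction t)
  case Leaf then show ?case by simp
next
  case (Node l a r)
  show ?case
  proof (cases "j = a")
    case True then show ?thesis by simp
  next
    case False
    show ?thesis
    proof (cases "j < a")
      case True
      then have "k \<in> set_tree l" using Node.prems False set_subtree_at by auto
      then show ?thesis using Node.prems by fastforce
    next
      case False2: False
      then have "k \<in> set_tree (subtree_at r j)" using Node.prems False by auto
      then show ?thesis using Node False False2 by auto
    qed
  qed
qed

lemma butlast_lt_last:
  fixes xs :: "nat list"
  assumes "sorted_wrt (<) xs" "x \<in> set (butlast xs)" shows "x < last xs"
proof -
  have ne: "xs \<noteq> []" using assms(2) by auto
  have "xs = butlast xs @ [last xs]" using ne by simp
  then have "sorted_wrt (<) (butlast xs @ [last xs])" using assms(1) by simp
  then show ?thesis using assms(2) by (simp add: sorted_wrt_append)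
qed

lemma in_butlast:
  fixes xs :: "nat list"
  assumes "sorted_wrt (<) xs" "x \<in> set xs" "y \<in> set xs" "x < y" shows "x \<in> set (butlast xs)"
proof (rule ccontr)
  assume nb: "x \<notin> set (butlast xs)"
  have ne: "xs \<noteq> []" using assms(2) by auto
  have e: "xs = butlast xs @ [last xs]" using ne by simp
  then have "set xs = insert (last xs) (set (butlast xs))" by (metis Un_insert_right append.right_neutral list.set(2) set_append list.set(1))
  then have "x = last xs" using assms(2) nb by auto
  moreover have "y = last xs \<or> y \<in> set (butlast xs)" using \<open>set xs = _\<close> assms(3) by auto
  ultimately show False using butlast_lt_last[OF assms(1), of y] assms(4) by auto
qed


theorem lemma8:
  fixes k :: nat and P :: "nat tree" and e :: "nat \<Rightarrow> bool"
  assumes "P \<in> trees k"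
    and "friendly k P e"
  shows "tame (sigma_minus k P e)"
proof -
  have ino: "inorder P = [1..<k+1]" using assms(1) unfolding trees_def by simp
  have bst: "bst P" unfolding bst_iff_sorted_wrt_less ino by (rule sorted_wrt_upt)
  have setP: "set_tree P = {1..k}" using arg_cong[OF ino, of set] unfolding set_inorder set_upt by auto
  have par: "parent P k \<noteq> None" and cl: "cL P k \<noteq> None"
    and sp: "\<forall>j \<in> BRm P (root P) - {root P}. \<not> e j"
    using assms(2) unfolding friendly_def by auto
  obtain l0 a0 r0 where P: "P = Node l0 a0 r0" using par by (cases P) auto
  have kin: "k \<in> set_tree (lsub P) \<union> set_tree (rsub P)" by (rule parent_in[OF par])
  have k1: "1 \<le> k" using kin setP P by auto
  have kP: "k \<in> set_tree P" using setP k1 by auto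
  have tau: "preorder P \<in> perms k"
    unfolding perms_def using setP ino distinct_preorder[of P]
    by (simp add: length_inorder[symmetric] del: length_inorder)
  have lt: "length (preorder P) = k" using tau unfolding perms_def by simp
  have dt: "distinct (preorder P)" using tau unfolding perms_def by simp
  have rootP: "root P = a0" unfolding P root_def by simp
  have t1: "pval (preorder P) 1 \<noteq> k"
  proof -
    have "pval (preorder P) 1 = a0" unfolding P pval_def by simp
    moreover have "k \<noteq> a0" using kin bst unfolding P by auto
    ultimately show ?thesis by simp
  qed
  have tk: "pval (preorder P) k \<noteq> k"
  proof
    assume h: "pval (preorder P) k = k"
    obtain l' r' where sk: "subtree_at P k = Node l' k r'" using subtree_node[OF bst kP] by auto
    have "l' \<noteq> Leaf" using cl unfolding cL_def sk by (cases l') auto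
    then have ne: "preorder l' \<noteq> []" by simp
    obtain xs ys where xy: "preorder P = xs @ preorder (subtree_at P k) @ ys"
      using preorder_split[OF bst kP] by auto
    have xy2: "preorder P = xs @ k # (preorder l' @ preorder r' @ ys)" using xy sk by simp
    have i1: "preorder P ! length xs = k" using xy2 by simp
    have i2: "preorder P ! (k - 1) = k" using h unfolding pval_def .
    have "k - 1 < length (preorder P)" "length xs < length (preorder P)" using lt k1 xy2 by auto
    then have "k - 1 = length xs" using nth_eq_iff_index_eq[OF dt] i1 i2 by metis
    moreover have "length (preorder P) \<ge> length xs + 2" using xy2 ne by (cases "preorder l'") auto
    ultimately show False using lt k1 by simp
  qed
  have rho_le: "rho P j - 1 \<le> k" if "j \<in> {1..k}" for j
  proof -
    have "j \<in> set (preorder P)" using that setP by simp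
    then obtain i where i: "i < length (preorder P)" "preorder P ! i = j" by (metis in_set_conv_nth)
    have "(LEAST i. i < length (preorder P) \<and> preorder P ! i = j) \<le> i"
      by (rule Least_le) (use i in simp)
    then show ?thesis unfolding rho_def using i lt by simp
  qed
  have setsub: "set_tree (subtree_at P j) \<subseteq> {1..k}" for j using set_subtree_at[of P j] setP by simp
  have spP: "sorted_wrt (<) (rspine P)" by (rule rspine_sorted[OF bst])
  have kmax: "\<forall>x\<in>set_tree P. x \<le> k" using setP by simp
  have ksp: "k \<in> set (rspine P)"
  proof -
    obtain l' r' where sk: "subtree_at P k = Node l' k r'" using subtree_node[OF bst kP] by auto
    show ?thesis by (rule spine_of_max[OF bst kmax]) (simp add: sk)
  qed
  have Cb: "\<forall>(a,b)\<in>snd (sigma_minus k P e). a \<le> k \<and> b < k"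
  proof (clarify)
    fix a b assume ab: "(a, b) \<in> snd (sigma_minus k P e)"
    then have ab': "(a, b) \<in> (\<Union>j \<in> {1..k}. Cset P j) \<union> (\<Union>j \<in> {1..k} - {root P}. Cset' P e j)"
      and nk: "(a, b) \<noteq> (rho P k - 1, k)"
      unfolding sigma_minus_def sigma_def by auto
    then show "a \<le> k \<and> b < k"
    proof (elim UnE UN_E)
      fix j assume j: "j \<in> {1..k}" and abj: "(a, b) \<in> Cset P j"
      then have a: "a = rho P j - 1" and bm: "b \<in> BRm P j" unfolding Cset_def by auto
      have sps: "sorted_wrt (<) (rspine (subtree_at P j))"
        by (rule rspine_sorted[OF bst_subtree_at[OF bst]])
      have bb: "b \<in> set (butlast (rspine (subtree_at P j)))" using bm unfolding BRm_def .
      have "b < last (rspine (subtree_at P j))" by (rule butlast_lt_last[OF sps bb])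
      moreover have "last (rspine (subtree_at P j)) \<in> set (rspine (subtree_at P j))"
        using bb by (metis empty_iff in_set_butlastD last_in_set list.set(1))
      then have "last (rspine (subtree_at P j)) \<le> k" using set_rspine setsub by fastforce
      ultimately show ?thesis using a rho_le[OF j] by simp
    next
      fix j assume j: "j \<in> {1..k} - {root P}" and abj: "(a, b) \<in> Cset' P e j"
      have ej: "e j" using abj unfolding Cset'_def by (auto split: if_splits)
      have a: "a = rho P j - 1" and bcases: "b = minP P j - 1 \<or> b = maxP P j"
        using abj ej unfolding Cset'_def by auto
      have jP: "j \<in> set_tree P" using j setP by auto
      obtain l' r' where sj: "subtree_at P j = Node l' j r'" using subtree_node[OF bst jP] by auto
      have fin: "finite (set_tree (subtree_at P j))" and nemp: "set_tree (subtree_at P j) \<noteq> {}"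
        using sj by auto
      have mi: "minP P j \<in> {1..k}" unfolding minP_def using Min_in[OF fin nemp] setsub by blast
      have ma: "maxP P j \<in> {1..k}" unfolding maxP_def using Max_in[OF fin nemp] setsub by blast
      have "b < k"
      proof (cases "b = minP P j - 1")
        case True then show ?thesis using mi by auto
      next
        case False
        then have bmax: "b = maxP P j" using bcases by simp
        show ?thesis
        proof (rule ccontr)
          assume "\<not> b < k"
          then have bk: "b = k" using ma bmax by auto
          then have jk: "j \<noteq> k" using nk a by auto
          have "k \<in> set_tree (subtree_at P j)"
            using Max_in[OF fin nemp] bk bmax unfolding maxP_def by simp
          then have jsp: "j \<in> set (rspine P)" by (rule spine_of_max[OF bst kmax])
          have "j < k" using jk j by auto
          then have "j \<in> set (butlast (rspine P))" by (rule in_butlast[OF spP jsp ksp])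
          moreover have "subtree_at P (root P) = P" unfolding rootP by (simp add: P)
          ultimately have "j \<in> BRm P (root P) - {root P}"
            using j unfolding BRm_def by simp
          then show False using sp ej by blast
        qed
      qed
      then show ?thesis using a rho_le[of j] j by simp
    qed
  qed
  have sm: "sigma_minus k P e = (preorder P, snd (sigma_minus k P e))"
    unfolding sigma_minus_def sigma_def by simp
  interpret goodmesh "preorder P" "snd (sigma_minus k P e)" k
    using tau k1 Cb t1 tk by unfold_locales
  show ?thesis by (subst sm) (rule tame)
qed

end
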